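(* Let $v,u$ be integrable functions on $[0,\infty)$ and let $m,M,n,N$ be real constants such that $$m\le v(x)\le M\quad\text{and}\quad n\le u(x)\le N\quad\text{for all }x\in[0,\infty).$$ Then for all $x>0$, $\alpha>0$, $\delta>0$, $\rho>0$ and $\beta,\lambda,\eta,k\in\mathbb{R}$, writing $A f=\,{}^{\rho}\mathcal{J}^{\alpha,\beta}_{\eta,k}f(x)$, $D f=\,{}^{\rho}\mathcal{J}^{\delta,\lambda}_{\eta,k}f(x)$, $\Lambda_1=\Lambda^{\rho,\beta}_{x,k}(\alpha,\eta)$, $\Lambda_2=\Lambda^{\rho,\lambda}_{x,k}(\delta,\eta)$, the following hold: (A) $M\Lambda_1\,Du+n\Lambda_2\,Av\ \ge\ nM\Lambda_2\Lambda_1+Du\,Av$; (B) $m\Lambda_2\,Au+N\Lambda_1\,Dv\ \ge\ mN\Lambda_2\Lambda_1+Dv\,Au$; (C) $MN\Lambda_1\Lambda_2+Av\,Du\ \ge\ M\Lambda_1\,Du+N\Lambda_2\,Av$; (D) $mn\Lambda_1\Lambda_2+Av\,Du\ \ge\ m\Lambda_1\,Du+n\Lambda_2\,Av$.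
   Context: For a function $f$ on $[0,\infty)$, $x>0$, $\alpha>0$, $\rho>0$ and $\beta,\eta,k\in\mathbb{R}$, the generalized Katugampola fractional integral is $${}^{\rho}\mathcal{J}^{\alpha,\beta}_{\eta,k}f(x)=\frac{\rho^{1-\beta}x^{k}}{\Gamma(\alpha)}\int_0^x\frac{\tau^{\rho(\eta+1)-1}}{(x^\rho-\tau^\rho)^{1-\alpha}}f(\tau)\,d\tau,$$ defined whenever the integral exists; all such integrals appearing are assumed to exist. Also $$\Lambda^{\rho,\beta}_{x,k}(\alpha,\eta)=\frac{\Gamma(\eta+1)}{\Gamma(\eta+\alpha+1)}\rho^{-\beta}x^{k+\rho(\eta+\alpha)}.$$ *)

theory Defs
  imports "HOL-Analysis.Analysis"
begin

definition katu_integrand ::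
  "real \<Rightarrow> real \<Rightarrow> real \<Rightarrow> (real \<Rightarrow> real) \<Rightarrow> real \<Rightarrow> real \<Rightarrow> real" where
  "katu_integrand \<rho> \<alpha> \<eta> f x \<tau> =
     \<tau> powr (\<rho> * (\<eta> + 1) - 1) / (x powr \<rho> - \<tau> powr \<rho>) powr (1 - \<alpha>) * f \<tau>"

definition katu_exists ::
  "real \<Rightarrow> real \<Rightarrow> real \<Rightarrow> (real \<Rightarrow> real) \<Rightarrow> real \<Rightarrow> bool" where
  "katu_exists \<rho> \<alpha> \<eta> f x \<longleftrightarrow> katu_integrand \<rho> \<alpha> \<eta> f x integrable_on {0..x}"

definition katu ::
  "real \<Rightarrow> real \<Rightarrow> real \<Rightarrow> real \<Rightarrow> real \<Rightarrow> (real \<Rightarrow> real) \<Rightarrow> real \<Rightarrow> real" where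
  "katu \<rho> \<alpha> \<beta> \<eta> k f x =
     \<rho> powr (1 - \<beta>) * x powr k / Gamma \<alpha> * integral {0..x} (katu_integrand \<rho> \<alpha> \<eta> f x)"

definition katu_Lambda ::
  "real \<Rightarrow> real \<Rightarrow> real \<Rightarrow> real \<Rightarrow> real \<Rightarrow> real \<Rightarrow> real" where
  "katu_Lambda \<rho> \<beta> x k \<alpha> \<eta> =
     Gamma (\<eta> + 1) / Gamma (\<eta> + \<alpha> + 1) * \<rho> powr (- \<beta>) * x powr (k + \<rho> * (\<eta> + \<alpha>))"

end

theory Submission
  imports Defs
begin

lemma pt_id:
  fixes x \<rho> \<alpha> \<eta> \<tau> :: real
  assumes x: "x > 0" and \<rho>: "\<rho> > 0" and t: "0 < \<tau>" "\<tau> \<le> x"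
  shows "katu_integrand \<rho> \<alpha> \<eta> (\<lambda>_. 1) x \<tau> =
    x powr (\<rho> * (\<eta> + \<alpha>)) / \<rho> *
    (((\<tau> / x) powr \<rho>) powr \<eta> * (1 - (\<tau> / x) powr \<rho>) powr (\<alpha> - 1) *
     (\<rho> / x * (\<tau> / x) powr (\<rho> - 1)))"
proof (cases "\<tau> = x")
  case True
  then show ?thesis using x by (simp add: katu_integrand_def)
next
  case False
  with t have tx: "\<tau> < x" by simp
  have tp: "\<tau> powr \<rho> < x powr \<rho>" using tx t \<rho> by (simp add: powr_less_mono2)
  define Dd where "Dd = x powr \<rho> - \<tau> powr \<rho>"
  have Dp: "Dd > 0" using tp Dd_def by simp
  have e1: "1 - (\<tau> / x) powr \<rho> = Dd / x powr \<rho>"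
    using x t by (simp add: Dd_def powr_divide field_simps)
  have lhs: "katu_integrand \<rho> \<alpha> \<eta> (\<lambda>_. 1) x \<tau> = exp ((\<rho> * (\<eta> + 1) - 1) * ln \<tau> + (\<alpha> - 1) * ln Dd)"
    unfolding katu_integrand_def Dd_def[symmetric]
    using t Dp by (simp add: powr_def exp_add exp_diff field_simps exp_minus)
  have rhs: "x powr (\<rho> * (\<eta> + \<alpha>)) / \<rho> *
    (((\<tau> / x) powr \<rho>) powr \<eta> * (1 - (\<tau> / x) powr \<rho>) powr (\<alpha> - 1) *
     (\<rho> / x * (\<tau> / x) powr (\<rho> - 1))) = exp ((\<rho> * (\<eta> + 1) - 1) * ln \<tau> + (\<alpha> - 1) * ln Dd)"
    unfolding e1 using t x Dp \<rho>
    apply (simp add: powr_def ln_div exp_add exp_diff ln_mult)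
    apply (simp add: field_simps exp_add[symmetric] exp_diff[symmetric])
    using x by (simp add: exp_add exp_diff)
  show ?thesis using lhs rhs by simp
qed

definition HB :: "real \<Rightarrow> real \<Rightarrow> real \<Rightarrow> real" where
  "HB \<eta> \<alpha> s = s powr \<eta> * (1 - s) powr (\<alpha> - 1)"

lemma HB_nonneg: "HB \<eta> \<alpha> s \<ge> 0" by (simp add: HB_def)

lemma K_nonneg: "katu_integrand \<rho> \<alpha> \<eta> (\<lambda>_. 1) x \<tau> \<ge> 0"
  by (simp add: katu_integrand_def)

lemma HB_meas[measurable]: "HB \<eta> \<alpha> \<in> borel_measurable borel"
  unfolding HB_def by measurable

lemma K_meas[measurable]: "katu_integrand \<rho> \<alpha> \<eta> (\<lambda>_. 1) x \<in> borel_measurable borel"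
  unfolding katu_integrand_def by measurable

lemma subst_step:
  fixes x \<rho> \<alpha> \<eta> e :: real
  assumes x: "x > 0" and \<rho>: "\<rho> > 0" and e: "0 < e" "e \<le> x"
  shows "(\<integral>\<^sup>+\<tau>. ennreal (katu_integrand \<rho> \<alpha> \<eta> (\<lambda>_. 1) x \<tau>) * indicator {e..x} \<tau> \<partial>lborel)
    = ennreal (x powr (\<rho> * (\<eta> + \<alpha>)) / \<rho>) *
      (\<integral>\<^sup>+s. ennreal (HB \<eta> \<alpha> s) * indicator {(e/x) powr \<rho>..1} s \<partial>lborel)"
proof -
  define g where "g = (\<lambda>\<tau>::real. (\<tau> / x) powr \<rho>)"
  define g' where "g' = (\<lambda>\<tau>::real. \<rho> / x * (\<tau> / x) powr (\<rho> - 1))"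
  define c where "c = x powr (\<rho> * (\<eta> + \<alpha>)) / \<rho>"
  have c: "c \<ge> 0" using \<rho> by (simp add: c_def)
  have S: "(\<integral>\<^sup>+s. HB \<eta> \<alpha> s * indicator {g e..g x} s \<partial>lborel) =
           (\<integral>\<^sup>+\<tau>. HB \<eta> \<alpha> (g \<tau>) * g' \<tau> * indicator {e..x} \<tau> \<partial>lborel)"
  proof (rule nn_integral_substitution)
    show "set_borel_measurable borel {g e..g x} (HB \<eta> \<alpha>)"
      unfolding set_borel_measurable_def by measurable
    show "(g has_real_derivative g' t) (at t)" if "t \<in> {e..x}" for t
      using that e x \<rho> unfolding g_def g'_def
      by (auto intro!: derivative_eq_intros simp: powr_diff field_simps)
    show "continuous_on {e..x} g'"
      unfolding g'_def using e x by (auto intro!: continuous_intros)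
    show "\<And>t. t \<in> {e..x} \<Longrightarrow> 0 \<le> g' t" using \<rho> x unfolding g'_def by auto
  qed (use e in auto)
  have gx: "g x = 1" using x by (simp add: g_def)
  have "ennreal c * (\<integral>\<^sup>+s. ennreal (HB \<eta> \<alpha> s) * indicator {g e..1} s \<partial>lborel)
     = ennreal c * (\<integral>\<^sup>+\<tau>. HB \<eta> \<alpha> (g \<tau>) * g' \<tau> * indicator {e..x} \<tau> \<partial>lborel)"
  proof -
    have "(\<integral>\<^sup>+s. ennreal (HB \<eta> \<alpha> s) * indicator {g e..1} s \<partial>lborel) =
          (\<integral>\<^sup>+s. ennreal (HB \<eta> \<alpha> s * indicator {g e..g x} s) \<partial>lborel)"
      by (rule nn_integral_cong) (simp add: gx indicator_def)
    then show ?thesis using S by simp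
  qed
  also have "\<dots> = (\<integral>\<^sup>+\<tau>. ennreal c * (HB \<eta> \<alpha> (g \<tau>) * g' \<tau> * indicator {e..x} \<tau>) \<partial>lborel)"
    by (rule nn_integral_cmult[symmetric]) (simp add: g_def g'_def)
  also have "\<dots> = (\<integral>\<^sup>+\<tau>. ennreal (katu_integrand \<rho> \<alpha> \<eta> (\<lambda>_. 1) x \<tau>) * indicator {e..x} \<tau> \<partial>lborel)"
  proof (rule nn_integral_cong)
    fix t :: real
    show "ennreal c * (HB \<eta> \<alpha> (g t) * g' t * indicator {e..x} t) =
          ennreal (katu_integrand \<rho> \<alpha> \<eta> (\<lambda>_. 1) x t) * indicator {e..x} t"
    proof (cases "t \<in> {e..x}")
      case True
      have "katu_integrand \<rho> \<alpha> \<eta> (\<lambda>_. 1) x t = c * (HB \<eta> \<alpha> (g t) * g' t)"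
        using pt_id[OF x \<rho>, of t \<alpha> \<eta>] True e unfolding c_def HB_def g_def g'_def by simp
      moreover have "HB \<eta> \<alpha> (g t) * g' t \<ge> 0" using \<rho> x by (simp add: HB_def g'_def)
      ultimately show ?thesis using True c by (simp add: ennreal_mult)
    qed simp
  qed
  finally show ?thesis unfolding c_def g_def by simp
qed

lemma nn_limit:
  fixes F :: "real \<Rightarrow> real" and e :: "nat \<Rightarrow> real" and b :: real
  assumes F[measurable]: "F \<in> borel_measurable borel" and F0: "F 0 = 0"
    and dec: "\<And>i. e (Suc i) \<le> e i" and pos: "\<And>i. e i > 0"
    and small: "\<And>t. t > 0 \<Longrightarrow> \<exists>i. e i \<le> t"
  shows "(\<integral>\<^sup>+t. ennreal (F t) * indicator {0..b} t \<partial>lborel) =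
         (SUP i. \<integral>\<^sup>+t. ennreal (F t) * indicator {e i..b} t \<partial>lborel)"
proof -
  let ?M = "density lborel (\<lambda>t. ennreal (F t))"
  have inc: "incseq (\<lambda>i. {e i..b})"
  proof (rule incseq_SucI)
    fix i show "{e i..b} \<subseteq> {e (Suc i)..b}" using dec[of i] by auto
  qed
  have U: "(\<Union>i. {e i..b}) = {0<..b}"
  proof
    show "(\<Union>i. {e i..b}) \<subseteq> {0<..b}"
    proof
      fix t assume "t \<in> (\<Union>i. {e i..b})"
      then obtain i where "e i \<le> t" "t \<le> b" by auto
      with pos[of i] show "t \<in> {0<..b}" by auto
    qed
    show "{0<..b} \<subseteq> (\<Union>i. {e i..b})"
    proof
      fix t assume "t \<in> {0<..b}"
      then obtain i where "e i \<le> t" using small by auto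
      with \<open>t \<in> {0<..b}\<close> show "t \<in> (\<Union>i. {e i..b})" by auto
    qed
  qed
  have "(SUP i. \<integral>\<^sup>+t. ennreal (F t) * indicator {e i..b} t \<partial>lborel) = (SUP i. emeasure ?M {e i..b})"
    by (subst emeasure_density) auto
  also have "\<dots> = emeasure ?M (\<Union>i. {e i..b})"
    by (rule SUP_emeasure_incseq) (use inc in auto)
  also have "\<dots> = (\<integral>\<^sup>+t. ennreal (F t) * indicator {0<..b} t \<partial>lborel)"
    unfolding U by (subst emeasure_density) auto
  also have "\<dots> = (\<integral>\<^sup>+t. ennreal (F t) * indicator {0..b} t \<partial>lborel)"
    by (rule nn_integral_cong) (auto simp: indicator_def F0)
  finally show ?thesis by simp
qed

lemma HB_infinite:
  fixes \<eta> \<alpha> :: real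
  assumes \<eta>: "\<eta> \<le> -1" and \<alpha>: "\<alpha> > 0"
  shows "(\<integral>\<^sup>+s. ennreal (HB \<eta> \<alpha> s) * indicator {0..1} s \<partial>lborel) = \<infinity>"
proof (rule ccontr)
  define d where "d = min 1 ((1/2::real) powr (\<alpha> - 1))"
  have d: "d > 0" by (simp add: d_def)
  have low: "(\<integral>\<^sup>+s. ennreal (HB \<eta> \<alpha> s) * indicator {0..1} s \<partial>lborel) \<ge> ennreal (d * ((1/2) powr a / a))"
    if a: "0 < a" "a \<le> 1" for a :: real
  proof -
    have hi: "((\<lambda>s. d * s powr (a - 1)) has_integral (d * ((1/2) powr a / a))) {0..1/2}"
      using has_integral_mult_right[OF has_integral_powr_from_0[of "a - 1" "1/2"], of d] a by simp
    have "ennreal (d * ((1/2) powr a / a)) = (\<integral>\<^sup>+s. ennreal (d * s powr (a - 1)) * indicator {0..1/2} s \<partial>lborel)"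
      using nn_integral_has_integral_lebesgue'[OF _ hi] d by simp
    also have "\<dots> \<le> (\<integral>\<^sup>+s. ennreal (HB \<eta> \<alpha> s) * indicator {0..1} s \<partial>lborel)"
    proof (rule nn_integral_mono)
      fix s :: real
      show "ennreal (d * s powr (a - 1)) * indicator {0..1/2} s \<le> ennreal (HB \<eta> \<alpha> s) * indicator {0..1} s"
      proof (cases "s \<in> {0<..1/2}")
        case True
        have "s powr (a - 1) \<le> s powr \<eta>" using True \<eta> a by (intro powr_mono') auto
        moreover have "d \<le> (1 - s) powr (\<alpha> - 1)"
        proof (cases "\<alpha> \<ge> 1")
          case True
          then have "(1/2) powr (\<alpha> - 1) \<le> (1 - s) powr (\<alpha> - 1)" using \<open>s \<in> {0<..1/2}\<close> by (intro powr_mono2) auto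
          then show ?thesis unfolding d_def by linarith
        next
          case False
          then have "1 powr (\<alpha> - 1) \<le> (1 - s) powr (\<alpha> - 1)" using \<open>s \<in> {0<..1/2}\<close> by (intro powr_mono2') auto
          then show ?thesis unfolding d_def by simp
        qed
        ultimately have "d * s powr (a - 1) \<le> (1 - s) powr (\<alpha> - 1) * s powr \<eta>"
          using d by (intro mult_mono) auto
        then have "d * s powr (a - 1) \<le> HB \<eta> \<alpha> s" unfolding HB_def by (simp add: mult.commute)
        then have "ennreal (d * s powr (a - 1)) \<le> ennreal (HB \<eta> \<alpha> s)" by (rule ennreal_leI)
        then show ?thesis using True by (simp add: indicator_def)
      next
        case False
        then have "s \<notin> {0..1/2} \<or> s = 0" by auto
        then show ?thesis
        proof
          assume "s \<notin> {0..1/2}" then show ?thesis by simp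
        next
          assume "s = 0" then show ?thesis by simp
        qed
      qed
    qed
    finally show ?thesis .
  qed
  assume "(\<integral>\<^sup>+s. ennreal (HB \<eta> \<alpha> s) * indicator {0..1} s \<partial>lborel) \<noteq> \<infinity>"
  then obtain r where r: "(\<integral>\<^sup>+s. ennreal (HB \<eta> \<alpha> s) * indicator {0..1} s \<partial>lborel) = ennreal r" "r \<ge> 0"
    by (cases "(\<integral>\<^sup>+s. ennreal (HB \<eta> \<alpha> s) * indicator {0..1} s \<partial>lborel)") auto
  define a where "a = min 1 (d / (2 * (r + 1)))"
  have a: "0 < a" "a \<le> 1" using d r by (auto simp: a_def)
  have "(1/2::real) powr 1 \<le> (1/2) powr a" using a by (intro powr_mono') auto
  then have h2: "1/2 \<le> (1/2::real) powr a" by simp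
  have "r + 1 \<le> d / (2 * a)"
  proof -
    have "a \<le> d / (2 * (r + 1))" by (simp add: a_def)
    then have "a * (2 * (r+1)) \<le> d" using r by (simp add: field_simps)
    then show ?thesis using a by (simp add: field_simps)
  qed
  also have "d / (2 * a) \<le> d * ((1/2) powr a / a)"
    using h2 a d by (simp add: field_simps)
  finally have "r + 1 \<le> d * ((1/2) powr a / a)" .
  moreover have "ennreal (d * ((1/2) powr a / a)) \<le> ennreal r" using low[OF a] r(1) by simp
  then have "d * ((1/2) powr a / a) \<le> r" using r(2) ennreal_le_iff by blast
  ultimately show False by linarith
qed

lemma beta_calc:
  fixes x \<rho> \<alpha> \<eta> :: real
  assumes x: "x > 0" and \<rho>: "\<rho> > 0" and \<alpha>: "\<alpha> > 0"
    and int: "katu_integrand \<rho> \<alpha> \<eta> (\<lambda>_. 1) x integrable_on {0..x}"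
  shows "\<eta> > -1 \<and> integral {0..x} (katu_integrand \<rho> \<alpha> \<eta> (\<lambda>_. 1) x)
           = x powr (\<rho> * (\<eta> + \<alpha>)) / \<rho> * Beta (\<eta> + 1) \<alpha>"
proof -
  define K where "K = katu_integrand \<rho> \<alpha> \<eta> (\<lambda>_. 1) x"
  define c where "c = x powr (\<rho> * (\<eta> + \<alpha>)) / \<rho>"
  have c: "c > 0" using \<rho> x by (simp add: c_def)
  have K0: "K 0 = 0" by (simp add: K_def katu_integrand_def)
  have I0: "integral {0..x} K \<ge> 0"
    using int unfolding K_def by (intro integral_nonneg) (auto simp: K_nonneg)
  have N: "(\<integral>\<^sup>+t. ennreal (K t) * indicator {0..x} t \<partial>lborel) = ennreal (integral {0..x} K)"
    using nn_integral_has_integral_lebesgue'[OF _ int[unfolded has_integral_integral]]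
    by (simp add: K_def K_nonneg)
  have "(\<integral>\<^sup>+t. ennreal (K t) * indicator {0..x} t \<partial>lborel)
      = (SUP i. \<integral>\<^sup>+t. ennreal (K t) * indicator {x / Suc i..x} t \<partial>lborel)"
  proof (rule nn_limit)
    show "K \<in> borel_measurable borel" unfolding K_def by measurable
    show "K 0 = 0" by (rule K0)
    show "\<And>i. x / real (Suc (Suc i)) \<le> x / real (Suc i)" using x by (intro divide_left_mono) auto
    show "\<And>i. x / real (Suc i) > 0" using x by simp
    show "\<exists>i. x / real (Suc i) \<le> t" if "t > 0" for t
    proof -
      obtain n :: nat where n: "x / t < n" using reals_Archimedean2 by blast
      have "x / real (Suc n) \<le> t" using n that x by (simp add: field_simps)
      then show ?thesis by blast
    qed
  qed
  also have "\<dots> = (SUP i. ennreal c * (\<integral>\<^sup>+s. ennreal (HB \<eta> \<alpha> s) * indicator {(1 / Suc i) powr \<rho>..1} s \<partial>lborel))"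
  proof (rule SUP_cong[OF refl])
    fix i :: nat
    have e: "0 < x / Suc i" "x / Suc i \<le> x" using x by (auto simp: field_simps)
    show "(\<integral>\<^sup>+t. ennreal (K t) * indicator {x / Suc i..x} t \<partial>lborel) =
      ennreal c * (\<integral>\<^sup>+s. ennreal (HB \<eta> \<alpha> s) * indicator {(1 / Suc i) powr \<rho>..1} s \<partial>lborel)"
      using subst_step[OF x \<rho> e, of \<alpha> \<eta>] x unfolding K_def c_def by simp
  qed
  also have "\<dots> = ennreal c * (SUP i. (\<integral>\<^sup>+s. ennreal (HB \<eta> \<alpha> s) * indicator {(1 / Suc i) powr \<rho>..1} s \<partial>lborel))"
    by (simp add: SUP_mult_left_ennreal)
  also have "(SUP i. (\<integral>\<^sup>+s. ennreal (HB \<eta> \<alpha> s) * indicator {(1 / Suc i) powr \<rho>..1} s \<partial>lborel))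
      = (\<integral>\<^sup>+s. ennreal (HB \<eta> \<alpha> s) * indicator {0..1} s \<partial>lborel)"
  proof (rule nn_limit[symmetric])
    show "HB \<eta> \<alpha> \<in> borel_measurable borel" by measurable
    show "HB \<eta> \<alpha> 0 = 0" by (simp add: HB_def)
    show "\<And>i. (1 / real (Suc (Suc i))) powr \<rho> \<le> (1 / real (Suc i)) powr \<rho>"
      using \<rho> by (intro powr_mono2) (auto simp: field_simps)
    show "\<And>i. (1 / real (Suc i)) powr \<rho> > 0" by simp
    show "\<exists>i. (1 / real (Suc i)) powr \<rho> \<le> t" if "t > 0" for t
    proof -
      obtain n :: nat where n: "1 / t powr (1 / \<rho>) < n" using reals_Archimedean2 by blast
      have tp: "t powr (1 / \<rho>) > 0" using that by simp
      have "1 / real (Suc n) \<le> t powr (1 / \<rho>)" using n tp by (simp add: field_simps) (smt (verit) tp)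
      then have "(1 / real (Suc n)) powr \<rho> \<le> (t powr (1 / \<rho>)) powr \<rho>"
        using \<rho> by (intro powr_mono2) auto
      also have "\<dots> = t" using \<rho> that by (simp add: powr_powr)
      finally show ?thesis by blast
    qed
  qed
  finally have E: "ennreal (integral {0..x} K) = ennreal c * (\<integral>\<^sup>+s. ennreal (HB \<eta> \<alpha> s) * indicator {0..1} s \<partial>lborel)"
    using N by simp
  show ?thesis
  proof (cases "\<eta> > -1")
    case True
    have hb: "((\<lambda>t. t powr (\<eta> + 1 - 1) * (1 - t) powr (\<alpha> - 1)) has_integral Beta (\<eta> + 1) \<alpha>) {0..1}"
      using has_integral_Beta_real[of "\<eta> + 1" \<alpha>] True \<alpha> by simp
    have "(\<integral>\<^sup>+s. ennreal (HB \<eta> \<alpha> s) * indicator {0..1} s \<partial>lborel) = ennreal (Beta (\<eta> + 1) \<alpha>)"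
      using nn_integral_has_integral_lebesgue'[OF _ hb] by (simp add: HB_def)
    moreover have "Beta (\<eta> + 1) \<alpha> \<ge> 0"
      using has_integral_nonneg[OF hb] by simp
    ultimately have "ennreal (integral {0..x} K) = ennreal (c * Beta (\<eta> + 1) \<alpha>)"
      using E c by (simp add: ennreal_mult)
    then have "integral {0..x} K = c * Beta (\<eta> + 1) \<alpha>"
      using I0 c \<open>Beta (\<eta> + 1) \<alpha> \<ge> 0\<close> by (simp add: ennreal_inj)
    then show ?thesis using True unfolding K_def c_def by simp
  next
    case False
    then have "(\<integral>\<^sup>+s. ennreal (HB \<eta> \<alpha> s) * indicator {0..1} s \<partial>lborel) = \<infinity>"
      using HB_infinite[of \<eta> \<alpha>] \<alpha> by simp
    then have "ennreal (integral {0..x} K) = \<infinity>" using E c by (simp add: ennreal_mult_top)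
    then show ?thesis by simp
  qed
qed

lemma katu_one:
  fixes x \<rho> \<alpha> \<beta> \<eta> k :: real
  assumes x: "x > 0" and \<rho>: "\<rho> > 0" and \<alpha>: "\<alpha> > 0"
    and ex1: "katu_exists \<rho> \<alpha> \<eta> (\<lambda>_. 1) x"
  shows "\<rho> powr (1 - \<beta>) * x powr k / Gamma \<alpha> * integral {0..x} (katu_integrand \<rho> \<alpha> \<eta> (\<lambda>_. 1) x)
    = katu_Lambda \<rho> \<beta> x k \<alpha> \<eta>"
proof -
  from beta_calc[OF x \<rho> \<alpha>] ex1 have b: "\<eta> > -1"
    and I: "integral {0..x} (katu_integrand \<rho> \<alpha> \<eta> (\<lambda>_. 1) x) = x powr (\<rho> * (\<eta> + \<alpha>)) / \<rho> * Beta (\<eta> + 1) \<alpha>"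
    by (auto simp: katu_exists_def)
  have g: "Gamma \<alpha> > 0" using \<alpha> by (rule Gamma_real_pos)
  have r: "\<rho> powr (1 - \<beta>) = \<rho> * \<rho> powr (- \<beta>)" using \<rho> powr_add[of \<rho> 1 "- \<beta>"] by simp
  have xx: "x powr (k + \<rho> * (\<eta> + \<alpha>)) = x powr k * x powr (\<rho> * (\<eta> + \<alpha>))" by (simp add: powr_add)
  show ?thesis unfolding I katu_Lambda_def Beta_def r xx
    using g \<rho> by (simp add: field_simps add_ac)
qed

lemma katu_bounds:
  fixes x \<rho> \<alpha> \<beta> \<eta> k lo hi :: real and f :: "real \<Rightarrow> real"
  assumes x: "x > 0" and \<rho>: "\<rho> > 0" and \<alpha>: "\<alpha> > 0"
    and ex1: "katu_exists \<rho> \<alpha> \<eta> (\<lambda>_. 1) x" and exf: "katu_exists \<rho> \<alpha> \<eta> f x"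
    and bd: "\<And>t. t \<ge> 0 \<Longrightarrow> lo \<le> f t \<and> f t \<le> hi"
  shows "lo * katu_Lambda \<rho> \<beta> x k \<alpha> \<eta> \<le> katu \<rho> \<alpha> \<beta> \<eta> k f x \<and>
         katu \<rho> \<alpha> \<beta> \<eta> k f x \<le> hi * katu_Lambda \<rho> \<beta> x k \<alpha> \<eta>"
proof -
  define K where "K = katu_integrand \<rho> \<alpha> \<eta> (\<lambda>_. 1) x"
  define P where "P = \<rho> powr (1 - \<beta>) * x powr k / Gamma \<alpha>"
  have P: "P > 0" using \<alpha> x \<rho> by (simp add: P_def Gamma_real_pos)
  have L: "katu_Lambda \<rho> \<beta> x k \<alpha> \<eta> = P * integral {0..x} K"
    using katu_one[OF x \<rho> \<alpha> ex1] unfolding P_def K_def by simp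
  have fK: "katu_integrand \<rho> \<alpha> \<eta> f x = (\<lambda>t. K t * f t)"
    by (simp add: K_def katu_integrand_def fun_eq_iff)
  have iK: "K integrable_on {0..x}" using ex1 by (simp add: K_def katu_exists_def)
  have iKf: "(\<lambda>t. K t * f t) integrable_on {0..x}" using exf fK by (simp add: katu_exists_def)
  have Kn: "K t \<ge> 0" for t by (simp add: K_def K_nonneg)
  have A: "katu \<rho> \<alpha> \<beta> \<eta> k f x = P * integral {0..x} (\<lambda>t. K t * f t)"
    by (simp add: katu_def P_def fK)
  have iKc: "(\<lambda>t. K t * c) integrable_on {0..x}" for c
    using integrable_on_cmult_right[OF iK, of c] by simp
  have up: "integral {0..x} (\<lambda>t. K t * f t) \<le> integral {0..x} K * hi"
    unfolding integral_mult_left[symmetric]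
    by (rule integral_le[OF iKf iKc])
       (use bd Kn in \<open>auto intro: mult_left_mono\<close>)
  have lw: "integral {0..x} K * lo \<le> integral {0..x} (\<lambda>t. K t * f t)"
    unfolding integral_mult_left[symmetric]
    by (rule integral_le[OF iKc iKf])
       (use bd Kn in \<open>auto intro: mult_left_mono\<close>)
  show ?thesis unfolding A L using mult_left_mono[OF up, of P] mult_left_mono[OF lw, of P] P
    by (simp add: ac_simps)
qed

theorem corollary2:
  fixes v u :: "real \<Rightarrow> real"
    and m M n N x \<alpha> \<delta> \<rho> \<beta> lam \<eta> k :: real
  assumes v_int: "v integrable_on {0..}" and u_int: "u integrable_on {0..}"
    and v_bd: "\<And>t. t \<ge> 0 \<Longrightarrow> m \<le> v t \<and> v t \<le> M"
    and u_bd: "\<And>t. t \<ge> 0 \<Longrightarrow> n \<le> u t \<and> u t \<le> N"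
    and x: "x > 0" and \<alpha>: "\<alpha> > 0" and \<delta>: "\<delta> > 0" and \<rho>: "\<rho> > 0"
    and ex_A: "\<forall>f \<in> {v, u, (\<lambda>_. 1)}. katu_exists \<rho> \<alpha> \<eta> f x"
    and ex_D: "\<forall>f \<in> {v, u, (\<lambda>_. 1)}. katu_exists \<rho> \<delta> \<eta> f x"
  defines "A \<equiv> \<lambda>f. katu \<rho> \<alpha> \<beta> \<eta> k f x"
    and "D \<equiv> \<lambda>f. katu \<rho> \<delta> lam \<eta> k f x"
    and "\<Lambda>1 \<equiv> katu_Lambda \<rho> \<beta> x k \<alpha> \<eta>"
    and "\<Lambda>2 \<equiv> katu_Lambda \<rho> lam x k \<delta> \<eta>"
  shows "(M * \<Lambda>1 * D u + n * \<Lambda>2 * A v \<ge> n * M * \<Lambda>2 * \<Lambda>1 + D u * A v) \<and>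
    (m * \<Lambda>2 * A u + N * \<Lambda>1 * D v \<ge> m * N * \<Lambda>2 * \<Lambda>1 + D v * A u) \<and>
    (M * N * \<Lambda>1 * \<Lambda>2 + A v * D u \<ge> M * \<Lambda>1 * D u + N * \<Lambda>2 * A v) \<and>
    (m * n * \<Lambda>1 * \<Lambda>2 + A v * D u \<ge> m * \<Lambda>1 * D u + n * \<Lambda>2 * A v)"
proof -
  have Av: "m * \<Lambda>1 \<le> A v \<and> A v \<le> M * \<Lambda>1"
    unfolding A_def \<Lambda>1_def using ex_A by (intro katu_bounds[OF x \<rho> \<alpha>] v_bd) auto
  have Au: "n * \<Lambda>1 \<le> A u \<and> A u \<le> N * \<Lambda>1"
    unfolding A_def \<Lambda>1_def using ex_A by (intro katu_bounds[OF x \<rho> \<alpha>] u_bd) auto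
  have Dv: "m * \<Lambda>2 \<le> D v \<and> D v \<le> M * \<Lambda>2"
    unfolding D_def \<Lambda>2_def using ex_D by (intro katu_bounds[OF x \<rho> \<delta>] v_bd) auto
  have Du: "n * \<Lambda>2 \<le> D u \<and> D u \<le> N * \<Lambda>2"
    unfolding D_def \<Lambda>2_def using ex_D by (intro katu_bounds[OF x \<rho> \<delta>] u_bd) auto
  have 1: "(M * \<Lambda>1 - A v) * (D u - n * \<Lambda>2) \<ge> 0" using Av Du by simp
  have 2: "(N * \<Lambda>1 - A u) * (D v - m * \<Lambda>2) \<ge> 0" using Au Dv by simp
  have 3: "(M * \<Lambda>1 - A v) * (N * \<Lambda>2 - D u) \<ge> 0" using Av Du by simp
  have 4: "(A v - m * \<Lambda>1) * (D u - n * \<Lambda>2) \<ge> 0" using Av Du by simp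
  show ?thesis using 1 2 3 4 by (simp add: algebra_simps)
qed

end
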